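(* In the setting of the context, consider a Case 1 spacetime ($x_-(v)\equiv0$). If $(dx_+/dv)/x_+^2$ converges as $v\to\infty$ and $\lim_{v\to\infty}\frac{dx_+/dv}{x_+(v)^2}>-\frac{h_c}{2}$, then the spacetime is of Type 2.
   Context: Spherically symmetric spacetime $ds^2=-f(v,r)A(v,r)^2dv^2+2A(v,r)\,dr\,dv+r^2d\Omega^2$ with $A>0$, $f,A\to1$ as $r\to\infty$, $f(v,0)=1$, $\partial_rf(v,0)=\partial_rA(v,0)=0$; $f(v,\cdot)$ has exactly two zeros $r_+(v)>r_-(v)$ (outer/inner apparent horizons, AHs), $f=F(r-r_+)(r-r_-)$ with $F>0$, and $h=AF>0$. Assumptions: $\partial_v r_+<0$; $r_\pm(v)\to r_c$ as $v\to\infty$; the sign of $\partial_v r_-$ is constant; the $v\to\infty$ limits of $A,F,h$ behave as analytic functions of $r$, so all $\partial_r^n h$ converge as $v\to\infty$; $h_c=\lim_{v\to\infty}h(v,r_c)$. With $x=r-r_c$, $x_\pm=r_\pm-r_c$ and $h$ regarded as a function of $(v,x)$, radially outgoing null geodesics solve $dx/dv=\tfrac12h(v,x)(x-x_+(v))(x-x_-(v))$. Case 1 means $\partial_v r_-=0$. Type 1 (Case 1) means every outgoing null geodesic strictly between the two AHs crosses the outer AH (the inner AH is the event horizon); Type 2 means there is an event horizon strictly outside the inner AH. *)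

theory Defs
  imports "HOL-Analysis.Analysis"
begin

text \<open>Coordinates: x = r - r_c.\<close>

definition outgoing_null_geodesic ::
  "(real \<Rightarrow> real \<Rightarrow> real) \<Rightarrow> (real \<Rightarrow> real) \<Rightarrow> (real \<Rightarrow> real) \<Rightarrow> real \<Rightarrow> (real \<Rightarrow> real) \<Rightarrow> bool"
  where "outgoing_null_geodesic h xp xm v0 x \<longleftrightarrow>
    (\<forall>v\<ge>v0. (x has_real_derivative
        (1/2) * h v (x v) * (x v - xp v) * (x v - xm v)) (at v within {v0..}))"

text \<open>Type 2: there is an event horizon strictly outside the inner apparent horizon,
  i.e. an outgoing null geodesic lying strictly between the two apparent horizons
  for all later times (it never crosses the outer apparent horizon).\<close>

definition type2 ::
  "(real \<Rightarrow> real \<Rightarrow> real) \<Rightarrow> (real \<Rightarrow> real) \<Rightarrow> (real \<Rightarrow> real) \<Rightarrow> bool"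
  where "type2 h xp xm \<longleftrightarrow>
    (\<exists>v0 x. outgoing_null_geodesic h xp xm v0 x \<and>
       (\<forall>v\<ge>v0. xm v < x v \<and> x v < xp v))"

end

theory Submission
  imports Defs
begin

lemma at_within_Ici_Icc:
  fixes a b x :: real
  assumes "x < b"
  shows "at x within {a..} = at x within {a..b}"
  by (rule at_within_nhd[where S="{..<b}"]) (use assms in auto)

lemma integral_deriv_Ici:
  fixes g :: "real \<Rightarrow> real"
  assumes "continuous_on UNIV g" "a \<le> x"
  shows "((\<lambda>t. integral {a..t} g) has_real_derivative g x) (at x within {a..})"
proof -
  have "((\<lambda>t. integral {a..t} g) has_real_derivative g x) (at x within {a..x+1})"
    by (rule integral_has_real_derivative) (use assms in \<open>auto intro: continuous_on_subset\<close>)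
  then show ?thesis using at_within_Ici_Icc[of x "x+1" a] by simp
qed

lemma ode_global:
  fixes G :: "real \<Rightarrow> real \<Rightarrow> real" and a y0 M K :: real
  assumes Gc: "\<And>y. continuous_on UNIV y \<Longrightarrow> continuous_on UNIV (\<lambda>t. G t (y t))"
    and Gb: "\<And>t y. \<bar>G t y\<bar> \<le> M"
    and Gl: "\<And>t y z. \<bar>G t y - G t z\<bar> \<le> K * \<bar>y - z\<bar>"
    and K: "K > 0"
  shows "\<exists>y. y a = y0 \<and> (\<forall>t\<ge>a. (y has_real_derivative G t (y t)) (at t within {a..}))"
proof -
  define E where "E t = exp (2*K*(t-a))" for t
  define Y where "Y u s = E s * apply_bcontfun u s" for u :: "real \<Rightarrow>\<^sub>C real" and s
  define I where "I u t = integral {a..max a t} (\<lambda>s. G s (Y u s))" for u t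
  define P where "P u t = (y0 + I u t) / E (max a t)" for u t
  have M0: "M \<ge> 0" using Gb[of 0 0] by linarith
  have Epos: "E t > 0" for t by (simp add: E_def)
  have Ecn: "continuous_on UNIV E" unfolding E_def by (intro continuous_intros)
  have Yc: "continuous_on UNIV (Y u)" for u unfolding Y_def by (intro continuous_intros Ecn) auto
  have gc: "continuous_on UNIV (\<lambda>s. G s (Y u s))" for u by (rule Gc[OF Yc])
  have Ider: "((\<lambda>t. integral {a..t} (\<lambda>s. G s (Y u s))) has_real_derivative G x (Y u x)) (at x within {a..})"
    if "a \<le> x" for u x
    using integral_deriv_Ici[OF gc that] .
  have Icont0: "continuous_on {a..} (\<lambda>t. integral {a..t} (\<lambda>s. G s (Y u s)))" for u
    by (rule DERIV_continuous_on[OF Ider]) auto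
  have Icont: "continuous_on UNIV (I u)" for u
  proof -
    have "continuous_on UNIV ((\<lambda>t. integral {a..t} (\<lambda>s. G s (Y u s))) \<circ> (\<lambda>t. max a t))"
      by (rule continuous_on_compose) (auto intro: continuous_intros continuous_on_subset[OF Icont0])
    then show ?thesis by (simp add: I_def o_def)
  qed
  have Ibound: "\<bar>I u t\<bar> \<le> M * (max a t - a)" for u t
    unfolding I_def using integral_bound[of a "max a t" "\<lambda>s. G s (Y u s)" M] gc Gb
    by (auto intro: continuous_on_subset)
  have Pbcont: "P u \<in> bcontfun" for u
  proof (rule bcontfun_normI)
    show "continuous_on UNIV (P u)" unfolding P_def E_def
      by (intro continuous_intros Icont) auto
  next
    fix t
    define \<tau> where "\<tau> = max a t - a"
    have \<tau>0: "\<tau> \<ge> 0" by (simp add: \<tau>_def)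
    have ET: "E (max a t) = exp (2*K*\<tau>)" by (simp add: E_def \<tau>_def)
    have e1: "exp (2*K*\<tau>) \<ge> 1" using \<tau>0 K by simp
    have e2: "2*K*\<tau> \<le> exp (2*K*\<tau>)" using exp_ge_add_one_self[of "2*K*\<tau>"] by linarith
    have "norm (P u t) = \<bar>y0 + I u t\<bar> / exp (2*K*\<tau>)" by (simp add: P_def ET)
    also have "\<dots> \<le> (\<bar>y0\<bar> + M*\<tau>) / exp (2*K*\<tau>)"
      using Ibound[of u t] by (intro divide_right_mono) (auto simp: \<tau>_def)
    also have "\<dots> = \<bar>y0\<bar>/exp(2*K*\<tau>) + M*\<tau>/exp(2*K*\<tau>)" by (simp add: add_divide_distrib)
    also have "\<dots> \<le> \<bar>y0\<bar> + M/(2*K)"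
    proof (rule add_mono)
      show "\<bar>y0\<bar>/exp(2*K*\<tau>) \<le> \<bar>y0\<bar>" using e1 by (simp add: divide_le_eq mult_le_cancel_left1)
      have "M*\<tau>*(2*K) \<le> M * exp(2*K*\<tau>)" using e2 M0 by (metis mult.assoc mult.commute mult_left_mono)
      then show "M*\<tau>/exp(2*K*\<tau>) \<le> M/(2*K)" using K by (simp add: divide_simps)
    qed
    finally show "norm (P u t) \<le> \<bar>y0\<bar> + M/(2*K)" .
  qed
  define Phi where "Phi u = Bcontfun (P u)" for u
  have Phi_app: "apply_bcontfun (Phi u) = P u" for u by (simp add: Phi_def Bcontfun_inverse Pbcont)
  have Eint: "integral {a..T} E = (E T - 1)/(2*K)" if "a \<le> T" for T
  proof -
    have "((\<lambda>s. E s/(2*K)) has_real_derivative E x) (at x within {a..T})" for x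
      unfolding E_def using K by (auto intro!: derivative_eq_intros)
    then have "(E has_integral ((\<lambda>s. E s/(2*K)) T - (\<lambda>s. E s/(2*K)) a)) {a..T}"
      by (intro fundamental_theorem_of_calculus[OF that]) (simp add: has_real_derivative_iff_has_vector_derivative[symmetric])
    then show ?thesis using K by (simp add: integral_unique E_def diff_divide_distrib)
  qed
  have contr: "dist (Phi u) (Phi w) \<le> 1/2 * dist u w" for u w
  proof (rule dist_bound)
    fix t
    define T where "T = max a t"
    have aT: "a \<le> T" by (simp add: T_def)
    have d: "\<bar>G s (Y u s) - G s (Y w s)\<bar> \<le> K * dist u w * E s" for s
    proof -
      have "\<bar>G s (Y u s) - G s (Y w s)\<bar> \<le> K * \<bar>Y u s - Y w s\<bar>" by (rule Gl)
      also have "\<bar>Y u s - Y w s\<bar> = E s * dist (u s) (w s)"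
        using Epos[of s] by (simp add: Y_def dist_real_def right_diff_distrib[symmetric] abs_mult)
      also have "\<dots> \<le> E s * dist u w" using Epos[of s] dist_bounded[of u s w]
        by (simp add: mult_left_mono)
      finally show ?thesis using K by (simp add: mult_left_mono mult_ac)
    qed
    have ci: "continuous_on {a..T} (\<lambda>s. G s (Y v s))" for v using gc continuous_on_subset by blast
    have "\<bar>I u t - I w t\<bar> = \<bar>integral {a..T} (\<lambda>s. G s (Y u s) - G s (Y w s))\<bar>"
      unfolding I_def T_def[symmetric]
      by (subst integral_diff) (auto intro!: integrable_continuous_real ci)
    also have "\<dots> \<le> integral {a..T} (\<lambda>s. K * dist u w * E s)"
    proof -
      have cE: "continuous_on {a..T} (\<lambda>s. K * dist u w * E s)"
        by (intro continuous_intros continuous_on_subset[OF Ecn]) auto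
      show ?thesis
        using integral_norm_bound_integral[of "\<lambda>s. G s (Y u s) - G s (Y w s)" "{a..T}" "\<lambda>s. K * dist u w * E s"]
          d integrable_continuous_real[OF continuous_on_diff[OF ci ci]] integrable_continuous_real[OF cE]
        by simp
    qed
    also have "\<dots> = K * dist u w * ((E T - 1)/(2*K))" using Eint[OF aT] by simp
    finally have 1: "\<bar>I u t - I w t\<bar> \<le> K * dist u w * ((E T - 1)/(2*K))" .
    have "dist (Phi u t) (Phi w t) = \<bar>I u t - I w t\<bar> / E T"
      using Epos[of T] by (simp add: Phi_app P_def T_def dist_real_def diff_divide_distrib[symmetric])
    also have "\<dots> \<le> K * dist u w * ((E T - 1)/(2*K)) / E T"
      using 1 Epos[of T] by (simp add: divide_right_mono)
    also have "\<dots> \<le> 1/2 * dist u w"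
      using K Epos[of T] zero_le_dist[of u w] by (simp add: divide_simps mult_left_mono)
    finally show "dist (Phi u t) (Phi w t) \<le> 1/2 * dist u w" .
  qed
  obtain u where u: "Phi u = u" using banach_fix_type[of "1/2" Phi] contr by auto
  define y where "y = Y u"
  have yeq: "y t = y0 + integral {a..t} (\<lambda>s. G s (y s))" if "a \<le> t" for t
  proof -
    have "u t = P u t" using u Phi_app by metis
    then show ?thesis using that Epos[of t] by (simp add: y_def Y_def P_def I_def max_def)
  qed
  have "y a = y0" using yeq[of a] by simp
  moreover have "(y has_real_derivative G t (y t)) (at t within {a..})" if "a \<le> t" for t
  proof (rule has_field_derivative_transform_within[where d=1])
    show "((\<lambda>t. y0 + integral {a..t} (\<lambda>s. G s (y s))) has_real_derivative G t (y t)) (at t within {a..})"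
      using Ider[OF that, of u] unfolding y_def by (auto intro!: derivative_eq_intros)
  qed (use that yeq in auto)
  ultimately show ?thesis by blast
qed

lemma lip_from_deriv:
  fixes \<phi> \<phi>' :: "real \<Rightarrow> real"
  assumes d: "\<And>s. s \<le> b \<Longrightarrow> (\<phi> has_real_derivative \<phi>' s) (at s)"
    and bd: "\<And>s. s \<le> b \<Longrightarrow> \<bar>\<phi>' s\<bar> \<le> C" and pb: "p \<le> b" and qb: "q \<le> b"
  shows "\<bar>\<phi> p - \<phi> q\<bar> \<le> C * \<bar>p - q\<bar>"
proof -
  have *: "\<bar>\<phi> p - \<phi> q\<bar> \<le> C * \<bar>p - q\<bar>" if "p < q" "q \<le> b" for p q
  proof -
    have "\<exists>z>p. z < q \<and> \<phi> q - \<phi> p = (q - p) * \<phi>' z"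
      using that by (intro MVT2) (auto intro!: d)
    then obtain z where z: "p < z" "z < q" "\<phi> q - \<phi> p = (q - p) * \<phi>' z" by blast
    have "\<bar>\<phi> p - \<phi> q\<bar> = \<bar>q - p\<bar> * \<bar>\<phi>' z\<bar>" proof -
      have "\<bar>\<phi> p - \<phi> q\<bar> = \<bar>\<phi> q - \<phi> p\<bar>" by (rule abs_minus_commute)
      also have "\<dots> = \<bar>q - p\<bar> * \<bar>\<phi>' z\<bar>" using z(3) by (simp add: abs_mult)
      finally show ?thesis .
    qed
    also have "\<dots> \<le> \<bar>q - p\<bar> * C" using bd[of z] z that by (intro mult_left_mono) auto
    finally show ?thesis by (simp add: abs_minus_commute mult.commute)
  qed
  have C0: "C \<ge> 0" using bd[of b] by linarith
  consider "p < q" | "q < p" | "p = q" by linarith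
  then show ?thesis
  proof cases
    case 1 then show ?thesis using *[of p q] qb by simp
  next
    case 2 then show ?thesis using *[of q p] pb by (simp add: abs_minus_commute)
  next
    case 3 then show ?thesis using C0 by simp
  qed
qed

lemma barrier:
  fixes g g' :: "real \<Rightarrow> real" and a t :: real
  assumes gc: "continuous_on {a..} g" and ga: "g a < 0"
    and gd: "\<And>t. t > a \<Longrightarrow> g t = 0 \<Longrightarrow> (g has_real_derivative g' t) (at t) \<and> g' t < 0"
    and at: "a \<le> t"
  shows "g t < 0"
proof (rule ccontr)
  assume "\<not> g t < 0"
  then have gt: "g t \<ge> 0" by simp
  have cab: "continuous_on {a..t} g" using gc by (rule continuous_on_subset) auto
  define S where "S = {a..t} \<inter> g -` {0}"
  have clS: "closed S" unfolding S_def using continuous_closed_preimage[OF cab] by auto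
  have Sne: "S \<noteq> {}" using IVT'[of g a 0 t] ga gt cab at by (auto simp: S_def)
  have bdd: "bdd_below S" unfolding S_def by (auto intro: bdd_belowI[where m=a])
  define t1 where "t1 = Inf S"
  have t1S: "t1 \<in> S" unfolding t1_def using closed_contains_Inf[OF Sne bdd clS] .
  then have t1: "a \<le> t1" "t1 \<le> t" "g t1 = 0" by (auto simp: S_def)
  have at1: "a < t1" using t1 ga by (metis order_le_less less_irrefl)
  have neg: "g s < 0" if "a \<le> s" "s < t1" for s
  proof (rule ccontr)
    assume "\<not> g s < 0"
    moreover have "continuous_on {a..s} g" using gc by (rule continuous_on_subset) auto
    ultimately have "\<exists>z\<ge>a. z \<le> s \<and> g z = 0" using that ga by (intro IVT') auto
    then obtain z where z: "a \<le> z" "z \<le> s" "g z = 0" by blast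
    then have "z \<in> S" using that t1 by (auto simp: S_def)
    then have "t1 \<le> z" unfolding t1_def using bdd by (rule cInf_lower)
    then show False using z that by linarith
  qed
  obtain d where d: "d > 0" "\<forall>h>0. h < d \<longrightarrow> g t1 < g (t1 - h)"
    using DERIV_neg_dec_left[of g "g' t1" t1] gd[OF at1 t1(3)] by blast
  define hh where "hh = min (d/2) ((t1 - a)/2)"
  have hh1: "hh > 0" using d(1) at1 by (simp add: hh_def)
  have hh2: "hh < d" using d(1) by (simp add: hh_def)
  have hh3: "hh \<le> (t1 - a)/2" unfolding hh_def by (rule min.cobounded2)
  note hh = hh1 hh2 hh3
  have "g t1 < g (t1 - hh)" using d hh by auto
  moreover have "g (t1 - hh) < 0" by (rule neg) (use hh at1 in \<open>simp_all add: field_simps\<close>)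
  ultimately show False using t1 by simp
qed


theorem corollary3:
  fixes h :: "real \<Rightarrow> real \<Rightarrow> real"
    and xp xp' :: "real \<Rightarrow> real"
    and rc hc L :: real
  assumes rc_pos: "rc > 0"
    and h_pos: "\<And>v x. x > - rc \<Longrightarrow> h v x > 0"
    and h_cont: "continuous_on (UNIV \<times> {- rc<..}) (\<lambda>(v, x). h v x)"
    and hx_cont: "continuous_on (UNIV \<times> {- rc<..}) (\<lambda>(v, x). deriv (h v) x)"
    and h_smooth: "\<And>v n x. x > - rc \<Longrightarrow> (deriv ^^ n) (h v) differentiable (at x)"
    and h_conv: "\<And>n K. compact K \<Longrightarrow> K \<subseteq> {- rc<..} \<Longrightarrow>
        \<exists>g. uniform_limit K (\<lambda>v x. (deriv ^^ n) (h v) x) g at_top"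
    and hc: "((\<lambda>v. h v 0) \<longlongrightarrow> hc) at_top"
    and xp_deriv: "\<And>v. (xp has_real_derivative xp' v) (at v)"
    and xp_decr: "\<And>v. xp' v < 0"
    and xp_pos: "\<And>v. xp v > 0"
    and xp_lim: "(xp \<longlongrightarrow> 0) at_top"
    and ratio_lim: "((\<lambda>v. xp' v / (xp v)^2) \<longlongrightarrow> L) at_top"
    and ratio_bound: "L > - hc / 2"
  shows "type2 h xp (\<lambda>v. 0)"
proof -
  have h0pos: "h v 0 > 0" for v using h_pos rc_pos by simp
  have hc0: "hc \<ge> 0"
    by (rule tendsto_lowerbound[OF hc]) (auto intro!: always_eventually less_imp_le h0pos)
  have L0: "L \<le> 0"
    by (rule tendsto_upperbound[OF ratio_lim])
       (auto intro!: always_eventually less_imp_le divide_neg_pos xp_decr simp: xp_pos less_imp_neq[OF xp_pos, symmetric])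
  have hcpos: "hc > 0" using ratio_bound L0 hc0 by linarith
  define c where "c = (1 + 2*L/hc)/2"
  have c0: "0 < c" using ratio_bound hcpos by (simp add: c_def field_simps)
  have c1: "c < 1" using L0 hcpos by (simp add: c_def field_simps)
  define \<epsilon> where "\<epsilon> = hc*(1-c)/2 + L"
  have \<epsilon>0: "\<epsilon> > 0"
  proof -
    have "0 < hc * (hc + 2*L)" using ratio_bound hcpos by (intro mult_pos_pos) auto
    then show ?thesis using hcpos by (simp add: \<epsilon>_def c_def field_simps; simp add: algebra_simps)
  qed
  have K01: "compact {0..1::real}" "{0..1::real} \<subseteq> {-rc<..}" using rc_pos by auto
  obtain g0 where g0: "uniform_limit {0..1} (\<lambda>v x. h v x) g0 at_top"
    using h_conv[OF K01, of 0] by auto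
  obtain g1 where g1: "uniform_limit {0..1} (\<lambda>v x. deriv (h v) x) g1 at_top"
    using h_conv[OF K01, of 1] by auto
  have hdiff: "(h v has_real_derivative deriv (h v) x) (at x)" if "x > -rc" for v x
    using h_smooth[OF that, of 0 v] by (simp add: DERIV_deriv_iff_real_differentiable)
  have cont_h: "continuous_on {0..1} (h v)" for v
    using rc_pos by (intro continuous_at_imp_continuous_on ballI DERIV_isCont[OF hdiff]) auto
  have cont_dh: "continuous_on {0..1} (deriv (h v))" for v
  proof (intro continuous_at_imp_continuous_on ballI)
    fix x :: real assume "x \<in> {0..1}"
    then have "deriv (h v) differentiable (at x)" using h_smooth[of x 1 v] rc_pos by simp
    then show "isCont (deriv (h v)) x" by (rule differentiable_imp_continuous_within)
  qed
  have g0c: "continuous_on {0..1} g0"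
    by (rule uniform_limit_theorem[OF _ g0]) (auto simp: cont_h)
  have g1c: "continuous_on {0..1} g1"
    by (rule uniform_limit_theorem[OF _ g1]) (auto simp: cont_dh)
  have "\<exists>B. \<forall>x\<in>{0..1}. \<bar>g0 x\<bar> \<le> B"
    using compact_imp_bounded[OF compact_continuous_image[OF g0c K01(1)]]
    by (auto simp: bounded_iff)
  then obtain B0 where B0: "\<And>x. x \<in> {0..1} \<Longrightarrow> \<bar>g0 x\<bar> \<le> B0" by blast
  have "\<exists>B. \<forall>x\<in>{0..1}. \<bar>g1 x\<bar> \<le> B"
    using compact_imp_bounded[OF compact_continuous_image[OF g1c K01(1)]]
    by (auto simp: bounded_iff)
  then obtain B1 where B1: "\<And>x. x \<in> {0..1} \<Longrightarrow> \<bar>g1 x\<bar> \<le> B1" by blast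
  have g00: "g0 0 = hc"
    using tendsto_unique[OF trivial_limit_at_top_linorder tendsto_uniform_limitI[OF g0, of 0] hc] by simp
  have ev1: "\<forall>\<^sub>F v in at_top. xp v < 1" using order_tendstoD(2)[OF xp_lim] by simp
  have ev2: "\<forall>\<^sub>F v in at_top. \<forall>x\<in>{0..1}. dist (h v x) (g0 x) < min 1 (\<epsilon>/2)"
    using uniform_limitD[OF g0, of "min 1 (\<epsilon>/2)"] \<epsilon>0 by linarith
  have ev3: "\<forall>\<^sub>F v in at_top. \<forall>x\<in>{0..1}. dist (deriv (h v) x) (g1 x) < 1"
    using uniform_limitD[OF g1] by simp
  have "((\<lambda>v. c * xp v) \<longlongrightarrow> c * 0) at_top" by (intro tendsto_intros xp_lim)
  then have "((\<lambda>v. g0 (c * xp v)) \<longlongrightarrow> g0 0) at_top"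
  proof (intro continuous_on_tendsto_compose[OF g0c])
    show "\<forall>\<^sub>F v in at_top. c * xp v \<in> {0..1}"
      using ev1
    proof eventually_elim
      case (elim v)
      have "c * xp v \<le> 1 * 1" by (rule mult_mono) (use c0 c1 xp_pos[of v] elim in auto)
      then show ?case using c0 xp_pos[of v] by simp
    qed
  qed auto
  then have ev4: "\<forall>\<^sub>F v in at_top. g0 (c * xp v) > hc - \<epsilon>/2"
    using order_tendstoD(1) g00 \<epsilon>0 by fastforce
  have ev5: "\<forall>\<^sub>F v in at_top. xp' v / (xp v)^2 > L - \<epsilon>/2"
    using order_tendstoD(1)[OF ratio_lim] \<epsilon>0 by simp
  obtain V where V: "\<And>v. v \<ge> V \<Longrightarrow> xp v < 1 \<and> (\<forall>x\<in>{0..1}. dist (h v x) (g0 x) < min 1 (\<epsilon>/2))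
     \<and> (\<forall>x\<in>{0..1}. dist (deriv (h v) x) (g1 x) < 1) \<and> g0 (c * xp v) > hc - \<epsilon>/2
     \<and> xp' v / (xp v)^2 > L - \<epsilon>/2"
    using eventually_conj[OF ev1 eventually_conj[OF ev2 eventually_conj[OF ev3 eventually_conj[OF ev4 ev5]]]]
    unfolding eventually_at_top_linorder by blast
  have xp_anti: "xp t \<le> xp s" if "s \<le> t" for s t
    using DERIV_nonpos_imp_nonincreasing[of s t xp] that xp_deriv xp_decr by (meson less_imp_le)
  define X where "X = xp V"
  have X0: "X > 0" and X1: "X < 1" using xp_pos V[of V] by (auto simp: X_def)
  define H where "H = B0 + 1"
  define B where "B = B1 + 1"
  have Hb: "\<bar>h v x\<bar> \<le> H" if "v \<ge> V" "x \<in> {0..1}" for v x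
    using V[OF that(1)] B0[OF that(2)] that(2) by (force simp: H_def dist_real_def)
  have Bb: "\<bar>deriv (h v) x\<bar> \<le> B" if "v \<ge> V" "x \<in> {0..1}" for v x
    using V[OF that(1)] B1[OF that(2)] that(2) by (force simp: B_def dist_real_def)
  have H0: "H \<ge> 0" using Hb[of V 0] by simp
  have Bn: "B \<ge> 0" using Bb[of V 0] by simp
  define Yc where "Yc = ln X"
  define G where "G t y = 1/2 * (h (max V t) (exp (min y Yc)) * (exp (min y Yc) - xp (max V t)))" for t y
  have eY: "0 < exp (min y Yc)" "exp (min y Yc) \<le> X" for y
  proof -
    show "0 < exp (min y Yc)" by simp
    have "exp (min y Yc) \<le> exp Yc" by simp
    then show "exp (min y Yc) \<le> X" using X0 by (simp add: Yc_def)
  qed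
  have eY1: "exp (min y Yc) \<in> {0..1}" for y unfolding atLeastAtMost_iff using eY[of y] X1 by linarith
  have xpc: "continuous_on UNIV xp"
    by (intro continuous_at_imp_continuous_on ballI DERIV_isCont[OF xp_deriv])
  have xpV: "0 < xp (max V t)" "xp (max V t) \<le> X" for t
    using xp_pos xp_anti[of V "max V t"] by (auto simp: X_def)
  have Gc: "continuous_on UNIV (\<lambda>t. G t (y t))" if "continuous_on UNIV y" for y
  proof -
    have "continuous_on UNIV (\<lambda>t. (\<lambda>(v,x). h v x) (max V t, exp (min (y t) Yc)))"
      by (rule continuous_on_compose2[OF h_cont])
         (use that rc_pos in \<open>auto intro!: continuous_intros intro: less_trans[OF _ exp_gt_zero]\<close>)
    then have h1: "continuous_on UNIV (\<lambda>t. h (max V t) (exp (min (y t) Yc)))" by simp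
    have h2: "continuous_on UNIV (\<lambda>t. xp (max V t))"
      by (rule continuous_on_compose2[OF xpc]) (auto intro!: continuous_intros)
    show ?thesis unfolding G_def
      by (intro continuous_intros h1 h2 that)
  qed
  have Gb: "\<bar>G t y\<bar> \<le> H * X / 2" for t y
  proof -
    have a1: "\<bar>h (max V t) (exp (min y Yc))\<bar> \<le> H" by (rule Hb[OF _ eY1]) simp
    have a2: "\<bar>exp (min y Yc) - xp (max V t)\<bar> \<le> X" using eY[of y] xpV[of t] by linarith
    have "\<bar>h (max V t) (exp (min y Yc))\<bar> * \<bar>exp (min y Yc) - xp (max V t)\<bar> \<le> H * X"
      by (rule mult_mono[OF a1 a2]) (use H0 in auto)
    then show ?thesis by (simp add: G_def abs_mult)
  qed
  define Kc where "Kc = (B*X*X + H*X)/2"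
  have Kc0: "Kc \<ge> 0" using Bn H0 X0 by (simp add: Kc_def)
  have Gl: "\<bar>G t y - G t z\<bar> \<le> (Kc + 1) * \<bar>y - z\<bar>" for t y z
  proof -
    define w where "w = max V t"
    have wV: "w \<ge> V" by (simp add: w_def)
    define \<phi> where "\<phi> s = 1/2 * (h w (exp s) * (exp s - xp w))" for s
    define \<phi>' where "\<phi>' s = 1/2 * ((deriv (h w) (exp s) * exp s) * (exp s - xp w) + exp s * h w (exp s))" for s
    have der: "(\<phi> has_real_derivative \<phi>' s) (at s)" for s
    proof -
      have d1: "((\<lambda>s. h w (exp s)) has_real_derivative deriv (h w) (exp s) * exp s) (at s)"
        by (rule DERIV_chain2[OF hdiff DERIV_exp]) (use rc_pos in \<open>simp add: less_trans[OF _ exp_gt_zero]\<close>)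
      have d2: "((\<lambda>s. exp s - xp w) has_real_derivative exp s) (at s)"
        by (auto intro!: derivative_eq_intros)
      show ?thesis unfolding \<phi>_def \<phi>'_def by (intro DERIV_cmult DERIV_mult d1 d2)
    qed
    have bd: "\<bar>\<phi>' s\<bar> \<le> Kc" if "s \<le> Yc" for s
    proof -
      have m: "min s Yc = s" using that by simp
      have e0: "0 < exp s" and eX: "exp s \<le> X" using eY[of s] by (auto simp: m)
      have e1: "exp s \<in> {0..1}" using eY1[of s] by (simp add: m)
      have b1: "\<bar>deriv (h w) (exp s)\<bar> \<le> B" by (rule Bb[OF wV e1])
      have b2: "\<bar>h w (exp s)\<bar> \<le> H" by (rule Hb[OF wV e1])
      have b3: "\<bar>exp s - xp w\<bar> \<le> X" using e0 eX xpV[of t] unfolding w_def abs_le_iff by linarith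
      have f1: "\<bar>deriv (h w) (exp s)\<bar> * \<bar>exp s\<bar> * \<bar>exp s - xp w\<bar> \<le> B * X * X"
        by (intro mult_mono b1 b3) (use Bn e0 eX X0 in auto)
      have f2: "\<bar>exp s\<bar> * \<bar>h w (exp s)\<bar> \<le> X * H"
        by (intro mult_mono b2) (use H0 e0 eX X0 in auto)
      have "\<bar>(deriv (h w) (exp s) * exp s) * (exp s - xp w) + exp s * h w (exp s)\<bar> \<le> B*X*X + H*X"
      proof -
        have "\<bar>(deriv (h w) (exp s) * exp s) * (exp s - xp w) + exp s * h w (exp s)\<bar>
          \<le> \<bar>(deriv (h w) (exp s) * exp s) * (exp s - xp w)\<bar> + \<bar>exp s * h w (exp s)\<bar>"
          by (rule abs_triangle_ineq)
        also have "\<dots> = \<bar>deriv (h w) (exp s)\<bar> * \<bar>exp s\<bar> * \<bar>exp s - xp w\<bar> + \<bar>exp s\<bar> * \<bar>h w (exp s)\<bar>"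
          by (simp only: abs_mult)
        finally show ?thesis using f1 f2 by (simp add: mult.commute)
      qed
      then show ?thesis by (simp add: \<phi>'_def Kc_def abs_mult)
    qed
    have "\<bar>\<phi> (min y Yc) - \<phi> (min z Yc)\<bar> \<le> Kc * \<bar>min y Yc - min z Yc\<bar>"
      by (rule lip_from_deriv[OF der bd]) auto
    also have "\<dots> \<le> Kc * \<bar>y - z\<bar>" by (rule mult_left_mono) (use Kc0 in \<open>auto simp: min_def\<close>)
    also have "\<dots> \<le> (Kc + 1) * \<bar>y - z\<bar>" by (simp add: distrib_right)
    finally show ?thesis by (simp add: G_def \<phi>_def w_def)
  qed
  obtain yy where yyV: "yy V = ln (c * X / 2)"
    and yyd: "\<And>t. t \<ge> V \<Longrightarrow> (yy has_real_derivative G t (yy t)) (at t within {V..})"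
    using ode_global[of G "H * X / 2" "Kc + 1" V "ln (c * X / 2)", OF Gc Gb Gl] Kc0 by auto
  have xpt: "c * xp t < xp t" "c * xp t \<le> X" "0 < c * xp t" if "t \<ge> V" for t
  proof -
    show "c * xp t < xp t" using c1 xp_pos[of t] by simp
    then show "c * xp t \<le> X" using xp_anti[OF that] by (simp add: X_def)
    show "0 < c * xp t" using c0 xp_pos[of t] by simp
  qed
  define gb where "gb t = yy t - ln (c * xp t)" for t
  define gb' where "gb' t = G t (yy t) - xp' t / xp t" for t
  have yyc: "continuous_on {V..} yy" by (rule DERIV_continuous_on) (use yyd in auto)
  have xpnz: "xp v \<noteq> 0" for v using xp_pos[of v] by simp
  have gbc: "continuous_on {V..} gb" unfolding gb_def
    using c0 xp_pos xpnz by (intro continuous_intros yyc continuous_on_subset[OF xpc]) auto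
  have gbV: "gb V < 0"
  proof -
    have "ln (c * X / 2) < ln (c * X)" using c0 X0 by (subst ln_less_cancel_iff) auto
    then show ?thesis by (simp add: gb_def yyV X_def)
  qed
  have gbd: "(gb has_real_derivative gb' t) (at t) \<and> gb' t < 0" if t: "t > V" "gb t = 0" for t
  proof
    have at: "at t within {V..} = at t" using t(1)
      by (subst at_within_nhd[of t "{V<..}" "{V..}" UNIV]) auto
    have d1: "(yy has_real_derivative G t (yy t)) (at t)" using yyd[of t] t(1) at by simp
    have d2: "((\<lambda>t. ln (c * xp t)) has_real_derivative xp' t / xp t) (at t)"
      using c0 xp_pos[of t] by (auto intro!: derivative_eq_intros xp_deriv simp: field_simps)
    show "(gb has_real_derivative gb' t) (at t)" unfolding gb_def gb'_def by (intro DERIV_diff d1 d2)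
    have tV: "t \<ge> V" using t(1) by simp
    have yt: "yy t = ln (c * xp t)" using t(2) by (simp add: gb_def)
    have m: "min (yy t) Yc = yy t" using xpt[OF tV] X0 by (simp add: yt Yc_def)
    have mx: "max V t = t" using tV by simp
    have ey: "exp (yy t) = c * xp t" using xpt[OF tV] by (simp add: yt)
    define hv where "hv = h t (c * xp t)"
    define r where "r = xp' t / (xp t)^2"
    have cx1: "c * xp t \<in> {0..1}" using xpt[OF tV] X1 by auto
    have hv: "hv > hc - \<epsilon>"
    proof -
      have "dist (h t (c * xp t)) (g0 (c * xp t)) < \<epsilon>/2" using V[OF tV] cx1 by auto
      then have "\<bar>h t (c * xp t) - g0 (c * xp t)\<bar> < \<epsilon>/2" by (simp add: dist_real_def)
      moreover have "g0 (c * xp t) > hc - \<epsilon>/2" using V[OF tV] by blast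
      ultimately show ?thesis unfolding hv_def abs_less_iff by linarith
    qed
    have r: "r > L - \<epsilon>/2" using V[OF tV] by (simp add: r_def)
    have k1: "hv*(1-c) \<ge> hc*(1-c) - \<epsilon>*(1-c)"
    proof -
      have "(hc - \<epsilon>)*(1-c) \<le> hv*(1-c)" by (rule mult_right_mono) (use hv c1 in auto)
      then show ?thesis by (simp add: left_diff_distrib)
    qed
    have k2: "hc*(1-c) = 2*(\<epsilon> - L)" by (simp add: \<epsilon>_def)
    have k3: "\<epsilon>*(1-c) \<le> \<epsilon>" using \<epsilon>0 c0 by (simp add: right_diff_distrib)
    have gen: "\<And>P Q R. Q - R \<le> P \<Longrightarrow> Q = 2*(\<epsilon>-L) \<Longrightarrow> R \<le> \<epsilon> \<Longrightarrow> 0 < P/2 + r"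
    proof -
      fix P Q R :: real
      assume "Q - R \<le> P" "Q = 2*(\<epsilon>-L)" "R \<le> \<epsilon>"
      then show "0 < P/2 + r" using r by argo
    qed
    have pos: "hv*(1-c)/2 + r > 0" by (rule gen[OF k1 k2 k3])
    have "gb' t = - xp t * (hv*(1-c)/2 + r)"
      using xp_pos[of t] by (simp add: gb'_def G_def m mx ey hv_def r_def field_simps power2_eq_square)
    also have "\<dots> < 0" using pos xp_pos[of t] by simp
    finally show "gb' t < 0" .
  qed
  have below: "yy t < ln (c * xp t)" if "t \<ge> V" for t
    using barrier[of V gb gb' t, OF gbc gbV gbd that] by (simp add: gb_def)
  define x where "x t = exp (yy t)" for t
  have props: "(x has_real_derivative 1/2 * h v (x v) * (x v - xp v) * (x v - 0)) (at v within {V..})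
      \<and> 0 < x v \<and> x v < xp v" if v: "V \<le> v" for v
  proof (intro conjI)
    have m: "min (yy v) Yc = yy v"
    proof -
      have "ln (c * xp v) \<le> ln X" using xpt[OF v] by (subst ln_le_cancel_iff) auto
      then show ?thesis using below[OF v] by (simp add: Yc_def)
    qed
    have mx: "max V v = v" using v by simp
    have "(x has_real_derivative exp (yy v) * G v (yy v)) (at v within {V..})"
      unfolding x_def by (rule DERIV_chain2[OF DERIV_exp yyd[OF v]])
    moreover have "exp (yy v) * G v (yy v) = 1/2 * h v (x v) * (x v - xp v) * (x v - 0)"
      by (simp add: G_def m mx x_def algebra_simps)
    ultimately show "(x has_real_derivative 1/2 * h v (x v) * (x v - xp v) * (x v - 0)) (at v within {V..})"
      by simp
    show "0 < x v" by (simp add: x_def)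
    have "x v < exp (ln (c * xp v))" unfolding x_def using below[OF v] by simp
    then show "x v < xp v" using xpt[OF v] by simp
  qed
  show ?thesis unfolding type2_def outgoing_null_geodesic_def
    using props by blast
qed

end
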